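(* Let $N\ge 2$. For every $\mathbf w\in W_N$, $$\|\mathbf w\|^2\le\binom{2N}{N}-2,$$ with equality if and only if $\mathbf w(x)=(x+\zeta)^N$ for some $N$-th root of unity $\zeta$.
   Context: Let $N\ge 2$ be an integer and $\mathbb T=\{z\in\mathbb C:|z|=1\}$. For $\mathbf a=(a_1,\dots,a_{N-1})\in\mathbb R^{N-1}$ define $\mathbf c=(c_1,\dots,c_{N-1})\in\mathbb C^{N-1}$ by $c_j=\frac{\sqrt2}{2}(a_j+i\,a_{N-j})$ for $1\le j<N/2$, $c_{N/2}=a_{N/2}$ (only when $N$ is even), and $c_j=\frac{\sqrt2}{2}(a_{N-j}-i\,a_j)$ for $N/2<j\le N-1$ (so $c_{N-j}=\overline{c_j}$ and $\|\mathbf c\|=\|\mathbf a\|$). Associate to $\mathbf a$ the monic polynomial $\mathbf a(x)=x^N+\sum_{n=1}^{N-1}c_nx^{N-n}+1$. Define $W_N=\{\mathbf a\in\mathbb R^{N-1}:\text{all roots of }\mathbf a(x)\text{ lie in }\mathbb T\}$. $\|\cdot\|$ is the Euclidean norm on $\mathbb R^{N-1}$. *)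

theory Defs
  imports "HOL-Analysis.Analysis" "HOL-Computational_Algebra.Polynomial"
begin

text \<open>A vector a in R^(N-1) is represented as a function nat => real
  supported on {1..N-1} (components a 1, ..., a (N-1)).\<close>

definition is_vec :: "nat \<Rightarrow> (nat \<Rightarrow> real) \<Rightarrow> bool" where
  "is_vec N a \<longleftrightarrow> (\<forall>k. k \<notin> {1..N-1} \<longrightarrow> a k = 0)"

definition cvec :: "nat \<Rightarrow> (nat \<Rightarrow> real) \<Rightarrow> nat \<Rightarrow> complex" where
  "cvec N a j =
     (if 2 * j < N then complex_of_real (sqrt 2 / 2) * (complex_of_real (a j) + \<i> * complex_of_real (a (N - j)))
      else if 2 * j = N then complex_of_real (a j)
      else complex_of_real (sqrt 2 / 2) * (complex_of_real (a (N - j)) - \<i> * complex_of_real (a j)))"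

definition apoly :: "nat \<Rightarrow> (nat \<Rightarrow> real) \<Rightarrow> complex poly" where
  "apoly N a = monom 1 N + (\<Sum>n\<in>{1..N-1}. monom (cvec N a n) (N - n)) + 1"

definition W :: "nat \<Rightarrow> (nat \<Rightarrow> real) set" where
  "W N = {a. is_vec N a \<and> (\<forall>z. poly (apoly N a) z = 0 \<longrightarrow> cmod z = 1)}"

definition vnorm :: "nat \<Rightarrow> (nat \<Rightarrow> real) \<Rightarrow> real" where
  "vnorm N a = sqrt (\<Sum>j\<in>{1..N-1}. (a j)\<^sup>2)"

end

theory Submission
  imports Defs "HOL-Computational_Algebra.Fundamental_Theorem_Algebra"
begin

lemma coeff_lin_mult:
  fixes q :: "complex poly"
  shows "coeff ([:a,1:] * q) k = (case k of 0 \<Rightarrow> a * coeff q 0 | Suc m \<Rightarrow> coeff q m + a * coeff q k)"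
  by (cases k) (simp_all add: coeff_pCons)

lemma factor_root:
  fixes p :: "complex poly"
  assumes "degree p = Suc n" "lead_coeff p = 1"
  obtains z q where "p = [:-z,1:] * q" "poly p z = 0" "degree q = n" "lead_coeff q = 1"
    "\<And>y. poly q y = 0 \<Longrightarrow> poly p y = 0"
proof -
  have "\<not> constant (poly p)" using assms by (simp add: constant_degree)
  then obtain z where z: "poly p z = 0" using fundamental_theorem_of_algebra by blast
  then have "[:-z,1:] dvd p" using poly_eq_0_iff_dvd by blast
  then obtain q where pq: "p = [:-z,1:] * q" by (elim dvdE)
  have q0: "q \<noteq> 0" using pq assms by auto
  have "degree ([:-z,1:]*q) = degree [:-z,1:] + degree q" by (rule degree_mult_eq) (auto simp: q0)
  then have dq: "degree q = n" using pq assms by simp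
  have "lead_coeff p = lead_coeff [:-z,1:] * lead_coeff q" unfolding pq by (rule lead_coeff_mult)
  then have "lead_coeff q = 1" using assms dq by simp
  moreover have "\<And>y. poly q y = 0 \<Longrightarrow> poly p y = 0" using pq by simp
  ultimately show ?thesis using that pq z dq by blast
qed

lemma coeff_bound:
  fixes p :: "complex poly"
  assumes "degree p = n" "lead_coeff p = 1" "\<forall>z. poly p z = 0 \<longrightarrow> cmod z \<le> 1"
  shows "cmod (coeff p k) \<le> real (n choose k)"
  using assms
proof (induction n arbitrary: p k)
  case 0
  then obtain c where "p = [:c:]" by (metis degree_eq_zeroE)
  with 0 have "p = [:1:]" by simp
  then show ?case by (cases k) auto
next
  case (Suc n)
  obtain z q where pq: "p = [:-z,1:] * q" "poly p z = 0" "degree q = n" "lead_coeff q = 1"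
    "\<And>y. poly q y = 0 \<Longrightarrow> poly p y = 0" using factor_root[OF Suc.prems(1,2)] by blast
  have zb: "cmod z \<le> 1" using Suc.prems(3) pq(2) by blast
  have IH: "\<And>j. cmod (coeff q j) \<le> real (n choose j)"
    using Suc.IH[OF pq(3,4)] Suc.prems(3) pq(5) by blast
  show ?case
  proof (cases k)
    case 0
    have "cmod (coeff p k) = cmod z * cmod (coeff q 0)" using pq(1) 0 by (simp add: coeff_lin_mult norm_mult)
    also have "\<dots> \<le> 1 * 1" using IH[of 0] zb by (intro mult_mono) auto
    finally show ?thesis using 0 by simp
  next
    case (Suc m)
    have "cmod (coeff p k) = cmod (coeff q m + (-z) * coeff q k)" using pq(1) Suc by (simp add: coeff_lin_mult)
    also have "\<dots> \<le> cmod (coeff q m) + cmod z * cmod (coeff q k)" by (metis norm_triangle_ineq norm_mult norm_minus_cancel)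
    also have "\<dots> \<le> real (n choose m) + 1 * real (n choose k)"
      using IH[of m] IH[of k] zb by (intro add_mono mult_mono) auto
    finally show ?thesis using Suc by simp
  qed
qed

lemma coeff_eq:
  fixes p :: "complex poly"
  assumes "degree p = Suc n" "lead_coeff p = 1" "\<forall>z. poly p z = 0 \<longrightarrow> cmod z \<le> 1"
    "cmod (coeff p n) = real (Suc n)"
  shows "\<exists>z. p = [:-z,1:] ^ Suc n"
  using assms
proof (induction n arbitrary: p)
  case 0
  obtain z q where pq: "p = [:-z,1:] * q" "poly p z = 0" "degree q = 0" "lead_coeff q = 1"
    using factor_root[OF 0(1,2)] by blast
  from pq(3) obtain c where "q = [:c:]" by (metis degree_eq_zeroE)
  with pq(4) have "q = 1" by (simp add: one_pCons)
  then show ?case using pq by auto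
next
  case (Suc n)
  obtain z q where pq: "p = [:-z,1:] * q" "poly p z = 0" "degree q = Suc n" "lead_coeff q = 1"
    "\<And>y. poly q y = 0 \<Longrightarrow> poly p y = 0" using factor_root[OF Suc.prems(1,2)] by blast
  have zb: "cmod z \<le> 1" using Suc.prems(3) pq(2) by blast
  have qr: "\<forall>y. poly q y = 0 \<longrightarrow> cmod y \<le> 1" using Suc.prems(3) pq(5) by blast
  have bq: "cmod (coeff q n) \<le> real (Suc n)"
    using coeff_bound[OF pq(3,4) qr, of n] by simp
  have cq: "coeff q (Suc n) = 1" using pq(3,4) by simp
  have cp: "coeff p (Suc n) = coeff q n + (-z)" using pq(1) cq by (simp add: coeff_lin_mult)
  have tri: "cmod (coeff q n + (-z)) \<le> cmod (coeff q n) + cmod z" by (metis norm_triangle_ineq norm_minus_cancel)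
  have e1: "cmod (coeff q n) = real (Suc n)" and e2: "cmod z = 1"
    using Suc.prems(4) cp tri bq zb by auto
  have eqt: "cmod (coeff q n + (-z)) = cmod (coeff q n) + cmod (-z)"
    using Suc.prems(4) cp e1 e2 by simp
  obtain w where qw: "q = [:-w,1:] ^ Suc n" using Suc.IH[OF pq(3,4) qr e1] by blast
  have cqn: "coeff q n = of_nat (Suc n) * (-w)" unfolding qw by (subst coeff_linear_poly_power) auto
  have "cmod (-z) *\<^sub>R coeff q n = cmod (coeff q n) *\<^sub>R (-z)" using eqt norm_triangle_eq by metis
  then have "of_nat (Suc n) * (-w) = of_nat (Suc n) * (-z)" using e1 e2 cqn
    by (simp add: scaleR_conv_of_real)
  then have "-w = -z" by (metis mult_cancel_left of_nat_eq_0_iff Zero_neq_Suc)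
  then have "w = z" by simp
  then have "p = [:-z,1:] ^ Suc (Suc n)" using pq(1) qw by (simp del: power_Suc add: power_Suc[symmetric])
  then show ?case by blast
qed

lemma coeff_apoly:
  assumes "N \<ge> 2"
  shows "coeff (apoly N a) k = (if k = N then 1 else if k = 0 then 1 else if k < N then cvec N a (N - k) else 0)"
proof -
  have s: "(\<Sum>n\<in>{1..N-1}. coeff (monom (cvec N a n) (N - n)) k) =
        (if 1 \<le> k \<and> k < N then cvec N a (N - k) else 0)"
  proof -
    have "(\<Sum>n\<in>{1..N-1}. coeff (monom (cvec N a n) (N - n)) k) =
          (\<Sum>n\<in>{1..N-1}. if n = N - k then cvec N a n else 0)"
      by (rule sum.cong) (auto simp: coeff_monom)
    also have "\<dots> = (if 1 \<le> k \<and> k < N then cvec N a (N - k) else 0)"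
      using assms by (subst sum.delta) auto
    finally show ?thesis .
  qed
  show ?thesis using assms unfolding apoly_def coeff_add coeff_sum s
    by (auto simp: coeff_monom)
qed

lemma degree_apoly:
  assumes "N \<ge> 2"
  shows "degree (apoly N a) = N"
proof (rule antisym)
  show "degree (apoly N a) \<le> N"
  proof (rule degree_le)
    show "\<forall>i>N. coeff (apoly N a) i = 0" using assms by (simp add: coeff_apoly)
  qed
  show "N \<le> degree (apoly N a)" by (rule le_degree) (use assms in \<open>simp add: coeff_apoly\<close>)
qed

lemma cmod_cvec:
  assumes "1 \<le> j" "j \<le> N - 1"
  shows "(cmod (cvec N a j))\<^sup>2 = ((a j)\<^sup>2 + (a (N - j))\<^sup>2) / 2"
proof -
  have h: "(sqrt 2 / 2)\<^sup>2 = (1/2::real)" by (simp add: power_divide)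
  have c1: "complex_of_real x + \<i> * complex_of_real y = Complex x y" for x y
    by (simp add: complex_eq_iff)
  have c2: "complex_of_real x - \<i> * complex_of_real y = Complex x (-y)" for x y
    by (simp add: complex_eq_iff)
  show ?thesis
  proof (cases "2 * j < N")
    case True
    then show ?thesis unfolding cvec_def
      by (simp add: c1 norm_mult power_mult_distrib complex_norm power_divide)
  next
    case False
    show ?thesis
    proof (cases "2 * j = N")
      case True
      then have "N - j = j" by simp
      then show ?thesis unfolding cvec_def using True by simp
    next
      case F2: False
      then show ?thesis unfolding cvec_def using False
        by (simp add: c2 norm_mult power_mult_distrib complex_norm power_divide)
    qed
  qed
qed

lemma sum_cvec:
  assumes "N \<ge> 2"
  shows "(\<Sum>j\<in>{1..N-1}. (cmod (cvec N a j))\<^sup>2) = (\<Sum>j\<in>{1..N-1}. (a j)\<^sup>2)"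
proof -
  have "(\<Sum>j\<in>{1..N-1}. (cmod (cvec N a j))\<^sup>2) = (\<Sum>j\<in>{1..N-1}. ((a j)\<^sup>2 + (a (N - j))\<^sup>2) / 2)"
    by (rule sum.cong) (auto simp: cmod_cvec)
  also have "\<dots> = ((\<Sum>j\<in>{1..N-1}. (a j)\<^sup>2) + (\<Sum>j\<in>{1..N-1}. (a (N - j))\<^sup>2)) / 2"
    by (simp only: sum.distrib[symmetric] sum_divide_distrib)
  also have "(\<Sum>j\<in>{1..N-1}. (a (N - j))\<^sup>2) = (\<Sum>j\<in>{1..N-1}. (a j)\<^sup>2)"
  proof -
    have "(\<Sum>j\<in>{1..N-1}. (a j)\<^sup>2) = (\<Sum>j\<in>{1..N-1}. (a (N - 1 + 1 - j))\<^sup>2)"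
      by (rule sum.atLeastAtMost_rev)
    also have "\<dots> = (\<Sum>j\<in>{1..N-1}. (a (N - j))\<^sup>2)" using assms by simp
    finally show ?thesis by simp
  qed
  finally show ?thesis by simp
qed

lemma binom_sq_sum:
  assumes "N \<ge> 2"
  shows "(\<Sum>n\<in>{1..N-1}. (real (N choose n))\<^sup>2) = real ((2 * N) choose N) - 2"
proof -
  have "real ((2 * N) choose N) = (\<Sum>k\<le>N. (real (N choose k))\<^sup>2)"
    by (subst choose_square_sum[symmetric]) simp
  also have "{..N} = insert 0 (insert N {1..N-1})" using assms by auto
  also have "(\<Sum>k\<in>insert 0 (insert N {1..N-1}). (real (N choose k))\<^sup>2)
      = 1 + (1 + (\<Sum>n\<in>{1..N-1}. (real (N choose n))\<^sup>2))"
    using assms by (simp add: sum.insert)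
  finally show ?thesis by simp
qed


theorem mainTheorem6:
  fixes N :: nat and w :: "nat \<Rightarrow> real"
  assumes "N \<ge> 2" and "w \<in> W N"
  shows "(vnorm N w)\<^sup>2 \<le> real ((2 * N) choose N) - 2 \<and>
         ((vnorm N w)\<^sup>2 = real ((2 * N) choose N) - 2 \<longleftrightarrow>
            (\<exists>\<zeta>::complex. \<zeta> ^ N = 1 \<and> apoly N w = [:\<zeta>, 1:] ^ N))"
proof -
  define P where "P = apoly N w"
  have dP: "degree P = N" unfolding P_def using assms(1) by (rule degree_apoly)
  have lP: "lead_coeff P = 1" using dP assms(1) unfolding P_def by (simp add: coeff_apoly)
  have c0: "coeff P 0 = 1" using assms(1) unfolding P_def by (simp add: coeff_apoly)
  have rP: "\<forall>z. poly P z = 0 \<longrightarrow> cmod z \<le> 1" using assms(2) unfolding W_def P_def by auto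
  have vn: "(vnorm N w)\<^sup>2 = (\<Sum>j\<in>{1..N-1}. (w j)\<^sup>2)" unfolding vnorm_def
    by (simp add: sum_nonneg)
  have cc: "coeff P (N - n) = cvec N w n" if "n \<in> {1..N-1}" for n
    using that assms(1) unfolding P_def by (auto simp: coeff_apoly)
  have S: "(vnorm N w)\<^sup>2 = (\<Sum>n\<in>{1..N-1}. (cmod (coeff P (N - n)))\<^sup>2)"
    using vn sum_cvec[OF assms(1), of w] cc by simp
  have tb: "(cmod (coeff P (N - n)))\<^sup>2 \<le> (real (N choose n))\<^sup>2" if "n \<in> {1..N-1}" for n
  proof -
    have "cmod (coeff P (N - n)) \<le> real (N choose (N - n))" by (rule coeff_bound[OF dP lP rP])
    also have "N choose (N - n) = N choose n" using that by (intro binomial_symmetric[symmetric]) auto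
    finally show ?thesis by (intro power_mono) auto
  qed
  have B: "(\<Sum>n\<in>{1..N-1}. (real (N choose n))\<^sup>2) = real ((2 * N) choose N) - 2"
    by (rule binom_sq_sum[OF assms(1)])
  have part1: "(vnorm N w)\<^sup>2 \<le> real ((2 * N) choose N) - 2"
    unfolding S B[symmetric] by (rule sum_mono) (rule tb)
  have part2: "(\<exists>\<zeta>::complex. \<zeta> ^ N = 1 \<and> P = [:\<zeta>, 1:] ^ N)"
    if eq: "(vnorm N w)\<^sup>2 = real ((2 * N) choose N) - 2"
  proof -
    have "(\<Sum>n\<in>{1..N-1}. (real (N choose n))\<^sup>2 - (cmod (coeff P (N - n)))\<^sup>2) = 0"
      using eq S B by (simp add: sum_subtractf)
    then have "\<forall>n\<in>{1..N-1}. (real (N choose n))\<^sup>2 - (cmod (coeff P (N - n)))\<^sup>2 = 0"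
      using tb by (subst sum_nonneg_eq_0_iff[symmetric]) auto
    moreover have "(1::nat) \<in> {1..N-1}" using assms(1) by simp
    ultimately have "(real (N choose 1))\<^sup>2 - (cmod (coeff P (N - 1)))\<^sup>2 = 0" by blast
    then have "(cmod (coeff P (N - 1)))\<^sup>2 = (real N)\<^sup>2" by simp
    then have "cmod (coeff P (N - 1)) = real N"
      using power2_eq_iff_nonneg[of "cmod (coeff P (N - 1))" "real N"] by simp
    then have "cmod (coeff P (N - 1)) = real (Suc (N - 1))" using assms(1) by simp
    moreover have "degree P = Suc (N - 1)" using dP assms(1) by simp
    ultimately obtain z where "P = [:-z,1:] ^ Suc (N - 1)" using coeff_eq[OF _ lP rP] by blast
    then have Pz: "P = [:-z,1:] ^ N" using assms(1) by simp
    have "coeff P 0 = (-z) ^ N" unfolding Pz by (subst coeff_linear_poly_power) auto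
    then have "(-z) ^ N = 1" using c0 by simp
    then show ?thesis using Pz by blast
  qed
  have part3: "(vnorm N w)\<^sup>2 = real ((2 * N) choose N) - 2"
    if ex: "\<exists>\<zeta>::complex. \<zeta> ^ N = 1 \<and> P = [:\<zeta>, 1:] ^ N"
  proof -
    obtain \<zeta> :: complex where z1: "\<zeta> ^ N = 1" and Pz: "P = [:\<zeta>, 1:] ^ N" using ex by blast
    have "cmod \<zeta> ^ N = 1" using z1 by (metis norm_one norm_power)
    then have n1: "cmod \<zeta> = 1" using power_eq_imp_eq_base[of "cmod \<zeta>" N 1] assms(1) by simp
    have "(cmod (coeff P (N - n)))\<^sup>2 = (real (N choose n))\<^sup>2" if "n \<in> {1..N-1}" for n
    proof -
      have "coeff P (N - n) = of_nat (N choose (N - n)) * \<zeta> ^ (N - (N - n))"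
        unfolding Pz by (subst coeff_linear_poly_power) auto
      then have "cmod (coeff P (N - n)) = real (N choose (N - n))" by (simp add: norm_mult norm_power n1)
      also have "N choose (N - n) = N choose n" using that by (intro binomial_symmetric[symmetric]) auto
      finally show ?thesis by simp
    qed
    then show ?thesis unfolding S B[symmetric] by (rule sum.cong[OF refl])
  qed
  show ?thesis using part1 part2 part3 unfolding P_def by blast
qed

end
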